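(* In the setting described in the context, let $i\in\mathcal V$ and let $z_{-i}=(z_j)_{j\ne i}$ satisfy $z_j<1$ for all $j\ne i$. Then the best response set of agent $i$ is the singleton $$\mathcal B_i(z_{-i})=\left\{\left[1-\frac{A_i(z_{-i})\pi_i\sigma_i^2}{B_i(z_{-i})}\right]_+\right\},$$ where $[a]_+=\max\{a,0\}$, $A_i(z_{-i})=\sum_{j\ne i}\frac{\pi_j}{1-z_j}$ and $B_i(z_{-i})=\sum_{j\ne i}\frac{\pi_j^2\sigma_j^2}{(1-z_j)^2}$. In particular $\mathcal B_i(z_{-i})\subseteq[0,1)$.
   Context: Let $n\ge2$ and $\mathcal V=\{1,\dots,n\}$. Let $P\in\mathbb{R}^{n\times n}$ be a row-stochastic, irreducible, aperiodic matrix (the graph on $\mathcal V$ with edge $(i,j)$ iff $P_{ij}>0$ is strongly connected with gcd of cycle lengths $1$) and $\pi$ the unique probability vector with $P'\pi=\pi$. For $z\in[0,1]^n$, $W(z)=(I-[z])P+[z]$ ($[z]$ the diagonal matrix with diagonal $z$) and $H(z)=\lim_{t\to\infty}W(z)^t$ (the limit exists and is row-stochastic). Let $\sigma_1^2,\dots,\sigma_n^2>0$. Agent $i$'s cost is $\upsilon_i(z)=\sum_jH_{ij}(z)^2\sigma_j^2$, written $\upsilon_i(z_i,z_{-i})$, and her best response set is $\mathcal B_i(z_{-i})=\arg\min_{z_i\in[0,1]}\upsilon_i(z_i,z_{-i})$. *)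

theory Defs
  imports "HOL-Analysis.Analysis"
begin

primrec mpow :: "real^'n^'n \<Rightarrow> nat \<Rightarrow> real^'n^'n" where
  "mpow A 0 = mat 1"
| "mpow A (Suc k) = A ** mpow A k"

definition row_stochastic :: "real^'n^'n \<Rightarrow> bool" where
  "row_stochastic P \<longleftrightarrow> (\<forall>i j. P$i$j \<ge> 0) \<and> (\<forall>i. (\<Sum>j\<in>UNIV. P$i$j) = 1)"

definition edges :: "real^'n^'n \<Rightarrow> ('n \<times> 'n) set" where
  "edges P = {(i,j). P$i$j > 0}"

definition irreducible_mat :: "real^'n^'n \<Rightarrow> bool" where
  "irreducible_mat P \<longleftrightarrow> (\<forall>i j. (i,j) \<in> (edges P)\<^sup>+)"

text \<open>Cycle lengths: lengths k \<ge> 1 of closed walks in the graph (gcd agrees with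
  that of simple cycle lengths).\<close>
definition aperiodic_mat :: "real^'n^'n \<Rightarrow> bool" where
  "aperiodic_mat P \<longleftrightarrow> Gcd {k::nat. k > 0 \<and> (\<exists>i. (i,i) \<in> (edges P) ^^ k)} = 1"

definition diagm :: "('n \<Rightarrow> real) \<Rightarrow> real^'n^'n" where
  "diagm z = (\<chi> i j. if i = j then z i else 0)"

definition Wmat :: "real^'n^'n \<Rightarrow> ('n \<Rightarrow> real) \<Rightarrow> real^'n^'n" where
  "Wmat P z = (mat 1 - diagm z) ** P + diagm z"

definition Hmat :: "real^'n^'n \<Rightarrow> ('n \<Rightarrow> real) \<Rightarrow> real^'n^'n" where
  "Hmat P z = lim (\<lambda>t. mpow (Wmat P z) t)"

definition cost :: "real^'n^'n \<Rightarrow> ('n \<Rightarrow> real) \<Rightarrow> 'n \<Rightarrow> ('n \<Rightarrow> real) \<Rightarrow> real" where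
  "cost P sigma2 i z = (\<Sum>j\<in>UNIV. (Hmat P z $ i $ j)^2 * sigma2 j)"

text \<open>Best response of agent i to z_{-i} (only the values z j, j \<noteq> i, matter).\<close>
definition best_response :: "real^'n^'n \<Rightarrow> ('n \<Rightarrow> real) \<Rightarrow> 'n \<Rightarrow> ('n \<Rightarrow> real) \<Rightarrow> real set" where
  "best_response P sigma2 i z =
     {x \<in> {0..1}. \<forall>y\<in>{0..1}. cost P sigma2 i (z(i := x)) \<le> cost P sigma2 i (z(i := y))}"

definition pos_part :: "real \<Rightarrow> real" where
  "pos_part a = max a 0"

end

theory Submission
  imports Defs
begin


lemma mpow_add: "mpow A (m + n) = mpow A m ** mpow A n"
  by (induction m) (simp_all add: matrix_mul_assoc)

lemma mpow_entry_Suc: "mpow W (Suc t) $ a $ c = (\<Sum>k\<in>UNIV. W$a$k * mpow W t $ k $ c)"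
  by (simp add: matrix_matrix_mult_def)

lemma mult_entry: "(A ** B) $ a $ c = (\<Sum>k\<in>UNIV. A$a$k * B$k$c)"
  by (simp add: matrix_matrix_mult_def)

lemma mat1_entry: "(mat 1 :: real^'n^'n) $ a $ c = (if a = c then 1 else 0)"
  by (simp add: mat_def)

lemma stoch_mult:
  assumes "row_stochastic A" "row_stochastic B"
  shows "row_stochastic (A ** B)"
proof -
  have nn: "(A ** B) $ a $ c \<ge> 0" for a c
    using assms unfolding row_stochastic_def mult_entry by (auto intro!: sum_nonneg)
  have "(\<Sum>c\<in>UNIV. (A ** B) $ a $ c) = 1" for a
  proof -
    have "(\<Sum>c\<in>UNIV. (A ** B) $ a $ c) = (\<Sum>k\<in>UNIV. A$a$k * (\<Sum>c\<in>UNIV. B$k$c))"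
      unfolding mult_entry sum_distrib_left by (rule sum.swap)
    also have "\<dots> = 1" using assms unfolding row_stochastic_def by simp
    finally show ?thesis .
  qed
  then show ?thesis using nn unfolding row_stochastic_def by auto
qed

lemma stoch_mpow: "row_stochastic W \<Longrightarrow> row_stochastic (mpow W t)"
proof (induction t)
  case 0
  have "(\<Sum>c\<in>UNIV. (mat 1 :: real^'a^'a) $ a $ c) = 1" for a
    by (simp add: mat1_entry)
  then show ?case unfolding row_stochastic_def by (auto simp: mat1_entry)
next
  case (Suc t) then show ?case by (simp add: stoch_mult)
qed

lemma interval_step:
  assumes "row_stochastic W" "\<forall>k. lo \<le> M$k$c \<and> M$k$c \<le> hi"
  shows "lo \<le> (W ** M)$a$c \<and> (W ** M)$a$c \<le> hi"
proof -
  have s: "(\<Sum>k\<in>UNIV. W$a$k) = 1" and nn: "\<And>k. W$a$k \<ge> 0" using assms(1) unfolding row_stochastic_def by auto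
  have "lo = (\<Sum>k\<in>UNIV. W$a$k * lo)" using s by (simp add: sum_distrib_right[symmetric])
  also have "\<dots> \<le> (\<Sum>k\<in>UNIV. W$a$k * M$k$c)"
    using assms(2) nn by (intro sum_mono mult_left_mono) auto
  finally have 1: "lo \<le> (W ** M)$a$c" by (simp add: mult_entry)
  have "(\<Sum>k\<in>UNIV. W$a$k * M$k$c) \<le> (\<Sum>k\<in>UNIV. W$a$k * hi)"
    using assms(2) nn by (intro sum_mono mult_left_mono) auto
  also have "\<dots> = hi" using s by (simp add: sum_distrib_right[symmetric])
  finally have 2: "(W ** M)$a$c \<le> hi" by (simp add: mult_entry)
  show ?thesis using 1 2 by auto
qed

lemma doeblin_step:
  assumes "row_stochastic Q" "\<forall>a. Q$a$v \<ge> d" "\<forall>k. lo \<le> M$k$c \<and> M$k$c \<le> lo + h"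
  shows "d * M$v$c + (1 - d) * lo \<le> (Q ** M)$a$c \<and> (Q ** M)$a$c \<le> d * M$v$c + (1 - d) * lo + (1 - d) * h"
proof -
  define R where "R k = Q$a$k - (if k = v then d else 0)" for k
  have s: "(\<Sum>k\<in>UNIV. Q$a$k) = 1" and nn: "\<And>k. Q$a$k \<ge> 0" using assms(1) unfolding row_stochastic_def by auto
  have Rnn: "R k \<ge> 0" for k using nn assms(2) unfolding R_def by auto
  have Rs: "(\<Sum>k\<in>UNIV. R k) = 1 - d" unfolding R_def using s by (simp add: sum_subtractf)
  have eq: "(Q ** M)$a$c = d * M$v$c + (\<Sum>k\<in>UNIV. R k * M$k$c)"
  proof -
    have "(\<Sum>k\<in>UNIV. R k * M$k$c) = (\<Sum>k\<in>UNIV. Q$a$k * M$k$c) - (\<Sum>k\<in>UNIV. (if k = v then d else 0) * M$k$c)"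
      unfolding R_def by (simp add: left_diff_distrib sum_subtractf)
    also have "(\<Sum>k\<in>UNIV. (if k = v then d else 0) * M$k$c) = d * M$v$c"
    proof -
      have "(\<Sum>k\<in>UNIV. (if k = v then d else 0) * M$k$c) = (\<Sum>k\<in>UNIV. if k = v then d * M$v$c else 0)"
        by (rule sum.cong) auto
      then show ?thesis by simp
    qed
    finally show ?thesis by (simp add: mult_entry)
  qed
  have "(1 - d) * lo = (\<Sum>k\<in>UNIV. R k * lo)" using Rs by (simp add: sum_distrib_right[symmetric])
  also have "\<dots> \<le> (\<Sum>k\<in>UNIV. R k * M$k$c)"
    using assms(3) Rnn by (intro sum_mono mult_left_mono) auto
  finally have 1: "(1 - d) * lo \<le> (\<Sum>k\<in>UNIV. R k * M$k$c)" .
  have "(\<Sum>k\<in>UNIV. R k * M$k$c) \<le> (\<Sum>k\<in>UNIV. R k * (lo + h))"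
    using assms(3) Rnn by (intro sum_mono mult_left_mono) auto
  also have "\<dots> = (\<Sum>k\<in>UNIV. R k) * (lo + h)" by (simp add: sum_distrib_right)
  also have "\<dots> = (1 - d) * lo + (1 - d) * h" unfolding Rs by (simp add: algebra_simps)
  finally have 2: "(\<Sum>k\<in>UNIV. R k * M$k$c) \<le> (1 - d) * lo + (1 - d) * h" .
  show ?thesis using 1 2 eq by auto
qed

lemma convex_bound:
  fixes w f :: "'n::finite \<Rightarrow> real"
  assumes "\<forall>k. w k \<ge> 0" "(\<Sum>k\<in>UNIV. w k) = 1" "\<forall>k. lo \<le> f k \<and> f k \<le> hi"
  shows "lo \<le> (\<Sum>k\<in>UNIV. w k * f k) \<and> (\<Sum>k\<in>UNIV. w k * f k) \<le> hi"
proof -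
  have "(\<Sum>k\<in>UNIV. w k * lo) = (\<Sum>k\<in>UNIV. w k) * lo" by (rule sum_distrib_right[symmetric])
  then have "lo = (\<Sum>k\<in>UNIV. w k * lo)" using assms(2) by simp
  also have "\<dots> \<le> (\<Sum>k\<in>UNIV. w k * f k)" using assms by (intro sum_mono mult_left_mono) auto
  finally have 1: "lo \<le> (\<Sum>k\<in>UNIV. w k * f k)" .
  have "(\<Sum>k\<in>UNIV. w k * f k) \<le> (\<Sum>k\<in>UNIV. w k * hi)" using assms by (intro sum_mono mult_left_mono) auto
  also have "(\<Sum>k\<in>UNIV. w k * hi) = (\<Sum>k\<in>UNIV. w k) * hi" by (rule sum_distrib_right[symmetric])
  finally show ?thesis using 1 assms(2) by simp
qed

lemma stationary_mpow:
  assumes "\<forall>k. (\<Sum>a\<in>UNIV. w a * W$a$k) = w k"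
  shows "(\<Sum>a\<in>UNIV. w a * mpow W t $ a $ c) = w c"
proof (induction t)
  case 0
  have "(\<Sum>a\<in>UNIV. w a * (mat 1 :: real^'a^'a) $ a $ c) = (\<Sum>a\<in>UNIV. if a = c then w c else 0)"
    by (rule sum.cong) (auto simp: mat1_entry)
  then show ?case by simp
next
  case (Suc t)
  have "(\<Sum>a\<in>UNIV. w a * mpow W (Suc t) $ a $ c) = (\<Sum>a\<in>UNIV. \<Sum>k\<in>UNIV. w a * W$a$k * mpow W t $ k $ c)"
    unfolding mpow_entry_Suc sum_distrib_left by (simp add: mult.assoc)
  also have "\<dots> = (\<Sum>k\<in>UNIV. \<Sum>a\<in>UNIV. w a * W$a$k * mpow W t $ k $ c)" by (rule sum.swap)
  also have "\<dots> = (\<Sum>k\<in>UNIV. (\<Sum>a\<in>UNIV. w a * W$a$k) * mpow W t $ k $ c)"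
    by (simp add: sum_distrib_right)
  also have "\<dots> = (\<Sum>k\<in>UNIV. w k * mpow W t $ k $ c)" using assms by simp
  finally show ?case using Suc by simp
qed

lemma mpow_converges:
  fixes W :: "real^'n^'n"
  assumes W: "row_stochastic W"
    and Q: "\<forall>a. mpow W N $ a $ v \<ge> d" and d: "d > 0"
    and w: "\<forall>k. w k \<ge> 0" "(\<Sum>k\<in>UNIV. w k) = 1" "\<forall>k. (\<Sum>a\<in>UNIV. w a * W$a$k) = w k"
  shows "(\<lambda>t. mpow W t $ a $ c) \<longlonglongrightarrow> w c"
proof -
  have QS: "row_stochastic (mpow W N)" using W by (rule stoch_mpow)
  have c1: "\<exists>lo. \<forall>k. lo \<le> mpow W (q*N) $ k $ c \<and> mpow W (q*N) $ k $ c \<le> lo + (1-d)^q" for q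
  proof (induction q)
    case 0
    show ?case by (rule exI[of _ 0]) (auto simp: mat1_entry)
  next
    case (Suc q)
    then obtain lo where lo: "\<forall>k. lo \<le> mpow W (q*N) $ k $ c \<and> mpow W (q*N) $ k $ c \<le> lo + (1-d)^q" by blast
    have eq: "mpow W (Suc q * N) = mpow W N ** mpow W (q*N)" by (metis mpow_add mult_Suc)
    have b: "\<forall>k. d * mpow W (q*N) $ v $ c + (1 - d) * lo \<le> (mpow W N ** mpow W (q*N))$k$c \<and>
       (mpow W N ** mpow W (q*N))$k$c \<le> d * mpow W (q*N) $ v $ c + (1 - d) * lo + (1-d)^Suc q"
      using doeblin_step[OF QS Q lo] by simp
    show ?case unfolding eq using b by blast
  qed
  have c2: "\<forall>k. lo \<le> mpow W t $ k $ c \<and> mpow W t $ k $ c \<le> hi"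
    if "s \<le> t" "\<forall>k. lo \<le> mpow W s $ k $ c \<and> mpow W s $ k $ c \<le> hi" for s t lo hi
    using that
  proof (induction t rule: dec_induct)
    case base then show ?case by simp
  next
    case (step t)
    then show ?case using interval_step[OF W, of lo "mpow W t" c hi] by simp
  qed
  show ?thesis
  proof (rule LIMSEQ_I)
    fix r :: real assume r: "r > 0"
    obtain q where q: "(1-d)^q < r" using real_arch_pow_inv[OF r, of "1-d"] d by auto
    obtain lo where lo: "\<forall>k. lo \<le> mpow W (q*N) $ k $ c \<and> mpow W (q*N) $ k $ c \<le> lo + (1-d)^q"
      using c1 by blast
    have "norm (mpow W t $ a $ c - w c) < r" if t: "t \<ge> q*N" for t
    proof -
      have b: "\<forall>k. lo \<le> mpow W t $ k $ c \<and> mpow W t $ k $ c \<le> lo + (1-d)^q"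
        using c2[OF t lo] .
      have "lo \<le> w c \<and> w c \<le> lo + (1-d)^q"
        using convex_bound[OF w(1) w(2) b] stationary_mpow[OF w(3)] by simp
      moreover have "lo \<le> mpow W t $ a $ c \<and> mpow W t $ a $ c \<le> lo + (1-d)^q" using b by blast
      ultimately show ?thesis using q unfolding real_norm_def abs_less_iff by linarith
    qed
    then show "\<exists>no. \<forall>t\<ge>no. norm (mpow W t $ a $ c - w c) < r" by blast
  qed
qed

lemma Hmat_eq:
  fixes W :: "real^'n^'n"
  assumes "\<And>a c. (\<lambda>t. mpow W t $ a $ c) \<longlonglongrightarrow> w c"
  shows "lim (\<lambda>t. mpow W t) = (\<chi> a c. w c)"
proof -
  have "(\<lambda>t. mpow W t) \<longlonglongrightarrow> (\<chi> a c. w c)"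
    by (intro vec_tendstoI) (simp add: assms)
  then show ?thesis by (rule limI)
qed



lemma mpow_nonneg:
  fixes W :: "real^'n^'n"
  assumes nn: "\<forall>a b. W$a$b \<ge> 0"
  shows "mpow W m $ a $ b \<ge> 0"
proof (induction m arbitrary: a)
  case 0 then show ?case by (simp add: mat1_entry)
next
  case (Suc m) then show ?case using nn by (simp add: mult_entry sum_nonneg)
qed

lemma pos_of_walk:
  fixes W :: "real^'n^'n"
  assumes nn: "\<forall>a b. W$a$b \<ge> 0"
  shows "(j,k) \<in> edges W ^^ m \<Longrightarrow> mpow W m $ j $ k > 0"
proof (induction m arbitrary: j)
  case 0 then show ?case by (simp add: mat1_entry)
next
  case (Suc m)
  then obtain y where y: "(j,y) \<in> edges W" "(y,k) \<in> edges W ^^ m" using relpow_Suc_D2 by metis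
  have p: "W$j$y * mpow W m $ y $ k > 0" using y Suc.IH[of y] by (simp add: edges_def)
  have nn2: "W$j$l * mpow W m $ l $ k \<ge> 0" for l
    using nn mpow_nonneg[OF nn] by (simp add: mult_nonneg_nonneg)
  have "W$j$y * mpow W m $ y $ k \<le> (\<Sum>l\<in>UNIV. W$j$l * mpow W m $ l $ k)"
    by (rule member_le_sum) (auto simp: nn2)
  then show ?case using p by (simp add: mult_entry)
qed

lemma semigroup_large:
  fixes S :: "nat set"
  assumes z: "0 \<in> S" and add: "\<And>a b. a \<in> S \<Longrightarrow> b \<in> S \<Longrightarrow> a + b \<in> S" and g: "Gcd S = 1"
  shows "\<exists>M. \<forall>m\<ge>M. m \<in> S"
proof -
  have mul: "q * b \<in> S" if "b \<in> S" for q b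
    by (induction q) (auto simp: z add that)
  obtain s where s: "s \<in> S" "s > 0"
  proof (rule ccontr)
    assume "\<not> thesis"
    then have "\<forall>s\<in>S. s = 0" using that by auto
    then have "0 dvd Gcd S" by (intro Gcd_greatest) auto
    then show False using g by simp
  qed
  define D where "D = {d. d > 0 \<and> (\<exists>a\<in>S. \<exists>b\<in>S. a = b + d)}"
  have sD: "s \<in> D" unfolding D_def using s z by auto
  define g where "g = (LEAST d. d \<in> D)"
  have gD: "g \<in> D" unfolding g_def using sD by (rule LeastI)
  then obtain a b where ab: "a \<in> S" "b \<in> S" "a = b + g" "g > 0" unfolding D_def by auto
  have gdvd: "g dvd t" if t: "t \<in> S" for t
  proof -
    define q r where "q = t div g" and "r = t mod g"
    have tq: "t = q * g + r" unfolding q_def r_def by simp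
    have r: "r < g" unfolding r_def using ab(4) by simp
    have "r = 0"
    proof (rule ccontr)
      assume "r \<noteq> 0"
      have "t + q * b = q * a + r" using tq ab(3) by (simp add: algebra_simps)
      moreover have "t + q * b \<in> S" "q * a \<in> S" using add mul t ab by auto
      ultimately have "r \<in> D" unfolding D_def using \<open>r \<noteq> 0\<close> by auto
      moreover have "\<not> r \<in> D" using r unfolding g_def by (rule not_less_Least)
      ultimately show False by blast
    qed
    then show ?thesis using tq by simp
  qed
  have "g dvd Gcd S" by (rule Gcd_greatest) (use gdvd in auto)
  then have g1: "g = 1" using g by simp
  show ?thesis
  proof (cases "b = 0")
    case True
    then have "1 \<in> S" using ab g1 by simp
    then show ?thesis using mul[of 1] by (metis mult.right_neutral)
  next
    case False
    have b1: "b + 1 \<in> S" using ab g1 by simp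
    have "m \<in> S" if m: "m \<ge> b * b" for m
    proof -
      define q r where "q = m div b" and "r = m mod b"
      have mq: "m = q * b + r" unfolding q_def r_def by simp
      have r: "r < b" unfolding r_def using False by simp
      have "b \<le> q" unfolding q_def using m False
        by (metis div_le_mono nonzero_mult_div_cancel_right)
      then have "m = (q - r) * b + r * (b + 1)" using mq r
        by (simp add: algebra_simps diff_mult_distrib)
      moreover have "(q - r) * b \<in> S" "r * (b + 1) \<in> S" using mul[OF ab(2)] mul[OF b1] by blast+
      ultimately show ?thesis using add by metis
    qed
    then show ?thesis by blast
  qed
qed

lemma aperiodic_reach:
  fixes E :: "'n rel"
  assumes irr: "\<forall>i j. (i,j) \<in> E\<^sup>+" and ap: "Gcd {k::nat. k > 0 \<and> (\<exists>i. (i,i) \<in> E ^^ k)} = 1"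
  shows "\<exists>M. \<forall>m\<ge>M. (v,v) \<in> E ^^ m"
proof -
  define S where "S = {k. (v,v) \<in> E ^^ k}"
  have z: "0 \<in> S" unfolding S_def by simp
  have add: "a + b \<in> S" if "a \<in> S" "b \<in> S" for a b
    using that unfolding S_def by (auto simp: relpow_add)
  have gk: "Gcd S dvd k" if k: "k \<in> {k::nat. k > 0 \<and> (\<exists>i. (i,i) \<in> E ^^ k)}" for k
  proof -
    obtain u where u: "(u,u) \<in> E ^^ k" using k by auto
    obtain a where a: "(v,u) \<in> E ^^ a" using irr trancl_power by metis
    obtain b where b: "(u,v) \<in> E ^^ b" using irr trancl_power by metis
    have "(v,v) \<in> E ^^ a O E ^^ b" using a b by blast
    then have "a + b \<in> S" unfolding S_def by (simp add: relpow_add)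
    have "(v,v) \<in> (E ^^ a O E ^^ k) O E ^^ b" using a b u by blast
    then have "a + k + b \<in> S" unfolding S_def by (simp add: relpow_add)
    then have "(a + b) + k \<in> S" by (simp add: add_ac)
    have "Gcd S dvd a + b" by (rule Gcd_dvd) fact
    moreover have "Gcd S dvd (a + b) + k" by (rule Gcd_dvd) fact
    ultimately show ?thesis using dvd_add_right_iff by blast
  qed
  have "Gcd S dvd Gcd {k::nat. k > 0 \<and> (\<exists>i. (i,i) \<in> E ^^ k)}"
    by (rule Gcd_greatest) (rule gk)
  then have "Gcd S = 1" using ap by simp
  then have "\<exists>M. \<forall>m\<ge>M. m \<in> S" using semigroup_large[OF z add] by blast
  then show ?thesis unfolding S_def by simp
qed

lemma selfloop_reach:
  assumes "(v,v) \<in> E"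
  shows "\<exists>M. \<forall>m\<ge>M. (v,v) \<in> E ^^ m"
proof -
  have "(v,v) \<in> E ^^ m" for m
  proof (induction m)
    case 0 then show ?case by simp
  next
    case (Suc m) then show ?case using relpow_Suc_I2[OF assms] by blast
  qed
  then show ?thesis by blast
qed

lemma reach_all:
  fixes E :: "'n::finite rel"
  assumes r: "\<forall>j. (j,v) \<in> E\<^sup>*" and M: "\<forall>m\<ge>M. (v,v) \<in> E ^^ m"
  shows "\<exists>N. \<forall>j. (j,v) \<in> E ^^ N"
proof -
  have "\<forall>j. \<exists>a. (j,v) \<in> E ^^ a" using r rtrancl_power by blast
  then obtain f where f: "\<forall>j. (j,v) \<in> E ^^ f j" by metis
  define N where "N = M + Max (range f)"
  have "(j,v) \<in> E ^^ N" for j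
  proof -
    have le: "f j \<le> Max (range f)" by simp
    have "N = f j + (N - f j)" "N - f j \<ge> M" using le unfolding N_def by linarith+
    have "(j,v) \<in> E ^^ f j O E ^^ (N - f j)" using f M \<open>N - f j \<ge> M\<close> by blast
    then show ?thesis using relpow_add[of "f j" "N - f j" E] \<open>N = f j + (N - f j)\<close> by simp
  qed
  then show ?thesis by blast
qed

lemma positive_column:
  fixes W :: "real^'n^'n"
  assumes nn: "\<forall>a b. W$a$b \<ge> 0" and N: "\<forall>j. (j,v) \<in> edges W ^^ N"
  shows "\<exists>d>0. \<forall>a. mpow W N $ a $ v \<ge> d"
proof -
  define d where "d = Min (range (\<lambda>a. mpow W N $ a $ v))"
  have "d \<in> range (\<lambda>a. mpow W N $ a $ v)" unfolding d_def by (intro Min_in) auto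
  then have "d > 0" using pos_of_walk[OF nn] N by auto
  moreover have "\<forall>a. mpow W N $ a $ v \<ge> d" unfolding d_def by simp
  ultimately show ?thesis by blast
qed



definition ff :: "real \<Rightarrow> real \<Rightarrow> real \<Rightarrow> real \<Rightarrow> real" where
  "ff s A B u = (s * u^2 + B) / (u + A)^2"

lemma ff_less:
  assumes s: "s > 0" and A: "A > 0" and B: "B > 0" and v: "v > 0" and u: "u > 0"
    and G: "s * A * (2 * u *  v + A * (u+v)) - B * (u+v+2 * A) > 0" and uv: "u > v"
  shows "ff s A B v < ff s A B u"
proof -
  have N: "(s * u^2+B) * (v+A)^2 - (s *  v^2+B) * (u+A)^2 = (u - v) * (s * A * (2 * u *  v + A * (u+v)) - B * (u+v+2 * A))"
    by (simp add: algebra_simps power2_eq_square)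
  have "(u - v) * (s * A * (2 * u *  v + A * (u+v)) - B * (u+v+2 * A)) > 0" using G uv by simp
  then have "(s *  v^2+B) * (u+A)^2 < (s * u^2+B) * (v+A)^2" using N by linarith
  then show ?thesis unfolding ff_def using A u v by (simp add: divide_simps)
qed

lemma ff_less2:
  assumes s: "s > 0" and A: "A > 0" and B: "B > 0" and v: "v > 0" and u: "u > 0"
    and G: "s * A * (2 * u *  v + A * (u+v)) - B * (u+v+2 * A) < 0" and uv: "u < v"
  shows "ff s A B v < ff s A B u"
proof -
  have N: "(s * u^2+B) * (v+A)^2 - (s *  v^2+B) * (u+A)^2 = (u - v) * (s * A * (2 * u *  v + A * (u+v)) - B * (u+v+2 * A))"
    by (simp add: algebra_simps power2_eq_square)
  have "(u - v) * (s * A * (2 * u *  v + A * (u+v)) - B * (u+v+2 * A)) > 0" using G uv by (simp add: mult_neg_neg)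
  then have "(s *  v^2+B) * (u+A)^2 < (s * u^2+B) * (v+A)^2" using N by linarith
  then show ?thesis unfolding ff_def using A u v by (simp add: divide_simps)
qed

lemma ff_min_interior:
  assumes s: "s > 0" and A: "A > 0" and B: "B > 0" and u: "u > 0"
    and v: "s * A *  v = B" and uv: "u \<noteq> v"
  shows "ff s A B v < ff s A B u"
proof -
  have vpos: "v > 0" using v s A B by (metis mult_pos_pos zero_less_mult_pos)
  have G: "s * A * (2 * u *  v + A * (u+v)) - B * (u+v+2 * A) = s * A * (u - v) * (v + A)"
    unfolding v[symmetric] by (simp add: algebra_simps power2_eq_square)
  show ?thesis
  proof (cases "u > v")
    case True
    have "s * A * (u - v) * (v + A) > 0" using True s A vpos by simp
    then show ?thesis using ff_less[OF s A B vpos u _ True] G by simp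
  next
    case False
    then have "u < v" using uv by simp
    have "s * A * (v - u) * (v + A) > 0" using \<open>u < v\<close> s A vpos by simp
    then have "s * A * (u - v) * (v + A) < 0" by (simp add: algebra_simps)
    then show ?thesis using ff_less2[OF s A B vpos u _ \<open>u < v\<close>] G by simp
  qed
qed

lemma ff_min_boundary:
  assumes s: "s > 0" and A: "A > 0" and B: "B > 0" and v: "v > 0"
    and vB: "s * A *  v \<ge> B" and uv: "u > v"
  shows "ff s A B v < ff s A B u"
proof -
  have u: "u > 0" using uv v by simp
  have h1: "s * A *  v * u \<ge> B * u" using vB u by (simp add: mult_right_mono)
  have h2: "s * A *  v * A \<ge> B * A" using vB A by (simp add: mult_right_mono)
  have "s * A * u > s * A *  v" using uv s A by simp
  then have h3: "s * A * u * A > B * A" using vB A by (metis mult_strict_right_mono order_le_less_trans)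
  have h4: "B * u > B *  v" using B uv by simp
  have "s * A * (2 * u *  v + A * (u+v)) - B * (u+v+2 * A) = 2 * (s * A *  v * u) + s * A * u * A + s * A *  v * A - B * u - B *  v - 2 * (B * A)"
    by (simp add: algebra_simps)
  also have "\<dots> > 0" using h1 h2 h3 h4 by linarith
  finally show ?thesis using ff_less[OF s A B v u _ uv] by simp
qed

lemma ff_below:
  assumes s: "s > 0" and A: "A > 0" and B: "B > 0" and v: "v > 0" and vB: "s * A *  v \<ge> B"
  shows "ff s A B v < s"
proof -
  have "B < s * (2 *  v * A + A^2)"
  proof -
    have "s * A^2 > 0" using s A by simp
    then show ?thesis using vB B by (simp add: algebra_simps power2_eq_square)
  qed
  then have "s * v^2 + B < s * (v + A)^2" by (simp add: algebra_simps power2_eq_square)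
  then show ?thesis unfolding ff_def using v A by (simp add: divide_simps)
qed



lemma Wmat_entry: "Wmat P z $ a $ b = (1 - z a) * P$a$b + (if a = b then z a else 0)"
proof -
  have e: "(mat 1 - diagm z) $ a $ k = (if k = a then 1 - z a else 0)" for k
    by (auto simp: mat_def diagm_def)
  have "((mat 1 - diagm z) ** P) $ a $ b = (\<Sum>k\<in>UNIV. if k = a then (1 - z a) * P$a$b else 0)"
    unfolding mult_entry e by (rule sum.cong) auto
  then show ?thesis unfolding Wmat_def by (simp add: diagm_def)
qed

lemma W_stoch:
  assumes "row_stochastic P" "\<forall>a. 0 \<le> z a \<and> z a \<le> 1"
  shows "row_stochastic (Wmat P z)"
proof -
  have "Wmat P z $ a $ b \<ge> 0" for a b
    using assms unfolding row_stochastic_def Wmat_entry by (auto intro!: add_nonneg_nonneg mult_nonneg_nonneg)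
  moreover have "(\<Sum>b\<in>UNIV. Wmat P z $ a $ b) = 1" for a
  proof -
    have "(\<Sum>b\<in>UNIV. Wmat P z $ a $ b) = (1 - z a) * (\<Sum>b\<in>UNIV. P$a$b) + (\<Sum>b\<in>UNIV. if a = b then z a else 0)"
      unfolding Wmat_entry by (simp add: sum.distrib sum_distrib_left)
    then show ?thesis using assms unfolding row_stochastic_def by simp
  qed
  ultimately show ?thesis unfolding row_stochastic_def by auto
qed

lemma W_edge:
  assumes "row_stochastic P" "\<forall>a. 0 \<le> z a \<and> z a \<le> 1" "z a < 1" "P$a$b > 0"
  shows "(a,b) \<in> edges (Wmat P z)"
proof -
  have "(1 - z a) * P$a$b > 0" using assms by simp
  moreover have "(if a = b then z a else 0) \<ge> 0" using assms by simp
  ultimately show ?thesis unfolding edges_def Wmat_entry by simp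
qed

lemma W_loop:
  assumes "row_stochastic P" "\<forall>a. 0 \<le> z a \<and> z a \<le> 1" "z a > 0"
  shows "(a,a) \<in> edges (Wmat P z)"
proof -
  have "(1 - z a) * P$a$a \<ge> 0" using assms unfolding row_stochastic_def by simp
  then show ?thesis unfolding edges_def Wmat_entry using assms by simp
qed

lemma stationary_P:
  fixes P :: "real^'n^'n" and pv :: "'n \<Rightarrow> real"
  assumes "transpose P *v (\<chi> j. pv j) = (\<chi> j. pv j)"
  shows "(\<Sum>a\<in>UNIV. pv a * P$a$k) = pv k"
proof -
  have "(transpose P *v (\<chi> j. pv j)) $ k = pv k" using assms by simp
  then have "(\<Sum>j\<in>UNIV. P $ j $ k * pv j) = pv k" by (simp add: matrix_vector_mult_def transpose_def)
  then show ?thesis by (simp add: mult.commute)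
qed

lemma pi_pos:
  fixes P :: "real^'n^'n" and pv :: "'n \<Rightarrow> real"
  assumes st: "row_stochastic P" and irr: "irreducible_mat P"
    and nn: "\<forall>j. pv j \<ge> 0" and s: "(\<Sum>j\<in>UNIV. pv j) = 1"
    and stat: "\<forall>k. (\<Sum>a\<in>UNIV. pv a * P$a$k) = pv k"
  shows "pv j > 0"
proof (rule ccontr)
  assume "\<not> pv j > 0"
  then have pj: "pv j = 0" using nn[rule_format, of j] by linarith
  have step: "pv a = 0" if "(a,b) \<in> edges P" "pv b = 0" for a b
  proof -
    have "pv a * P$a$b \<le> (\<Sum>c\<in>UNIV. pv c * P$c$b)"
      by (rule member_le_sum) (use nn st in \<open>auto simp: row_stochastic_def\<close>)
    then have "pv a * P$a$b \<le> 0" using stat that by simp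
    moreover have "P$a$b > 0" using that by (simp add: edges_def)
    ultimately show ?thesis using nn by (metis less_eq_real_def mult_le_0_iff not_le)
  qed
  have "pv a = 0" for a
  proof -
    have "(a,j) \<in> (edges P)\<^sup>+" using irr unfolding irreducible_mat_def by blast
    then show ?thesis
    proof (induction rule: converse_trancl_induct)
      case (base y) then show ?case using step pj by blast
    next
      case (step y z) then show ?case using \<open>\<And>a b. (a,b) \<in> edges P \<Longrightarrow> pv b = 0 \<Longrightarrow> pv a = 0\<close> by blast
    qed
  qed
  then show False using s by simp
qed

lemma relpow_mono_sub: fixes E F :: "'n rel" shows "E \<subseteq> F \<Longrightarrow> E ^^ k \<subseteq> F ^^ k"
  by (induction k) (simp_all add: relcomp_mono)

lemma H_lt1:
  fixes P :: "real^'n^'n" and pv :: "'n \<Rightarrow> real" and zz :: "'n \<Rightarrow> real"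
  assumes st: "row_stochastic P" and irr: "irreducible_mat P" and ap: "aperiodic_mat P"
    and nn: "\<forall>j. pv j \<ge> 0" and s: "(\<Sum>j\<in>UNIV. pv j) = 1"
    and stat: "\<forall>k. (\<Sum>a\<in>UNIV. pv a * P$a$k) = pv k"
    and zz: "\<forall>a. 0 \<le> zz a \<and> zz a < 1"
  shows "Hmat P zz = (\<chi> a c. (pv c / (1 - zz c)) / (\<Sum>b\<in>UNIV. pv b / (1 - zz b)))"
proof -
  define W where "W = Wmat P zz"
  have zz1: "\<forall>a. 0 \<le> zz a \<and> zz a \<le> 1" using zz by (simp add: less_imp_le)
  have WS: "row_stochastic W" unfolding W_def using W_stoch[OF st zz1] .
  have sub: "edges P \<subseteq> edges W"
    unfolding W_def using W_edge[OF st zz1] zz by (auto simp: edges_def)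
  have irrW: "\<forall>i j. (i,j) \<in> (edges W)\<^sup>+"
    using irr trancl_mono_subset[OF sub] unfolding irreducible_mat_def by blast
  have apW: "Gcd {k::nat. k > 0 \<and> (\<exists>i. (i,i) \<in> edges W ^^ k)} = 1"
  proof -
    have "Gcd {k::nat. k > 0 \<and> (\<exists>i. (i,i) \<in> edges W ^^ k)} dvd Gcd {k::nat. k > 0 \<and> (\<exists>i. (i,i) \<in> edges P ^^ k)}"
    proof (rule Gcd_greatest)
      fix k assume "k \<in> {k::nat. k > 0 \<and> (\<exists>i. (i,i) \<in> edges P ^^ k)}"
      then have "k \<in> {k::nat. k > 0 \<and> (\<exists>i. (i,i) \<in> edges W ^^ k)}"
        using relpow_mono_sub[OF sub, of k] by blast
      then show "Gcd {k::nat. k > 0 \<and> (\<exists>i. (i,i) \<in> edges W ^^ k)} dvd k" by (rule Gcd_dvd)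
    qed
    then show ?thesis using ap unfolding aperiodic_mat_def by simp
  qed
  obtain v :: 'n where True by simp
  obtain M where M: "\<forall>m\<ge>M. (v,v) \<in> edges W ^^ m" using aperiodic_reach[of "edges W", OF irrW] apW by blast
  have "\<forall>j. (j,v) \<in> (edges W)\<^sup>*" using irrW by (simp add: trancl_into_rtrancl)
  then obtain N where N: "\<forall>j. (j,v) \<in> edges W ^^ N" using reach_all M by blast
  have Wnn: "\<forall>a b. W$a$b \<ge> 0" using WS unfolding row_stochastic_def by blast
  obtain d where d: "d > 0" "\<forall>a. mpow W N $ a $ v \<ge> d" using positive_column[OF Wnn N] by blast
  define c where "c a = pv a / (1 - zz a)" for a
  define S where "S = (\<Sum>b\<in>UNIV. c b)"
  have cnn: "c a \<ge> pv a" for a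
  proof -
    have "pv a * 1 \<le> pv a * (1 / (1 - zz a))"
      using nn zz by (intro mult_left_mono) (auto simp: field_simps)
    then show ?thesis unfolding c_def by simp
  qed
  have "S \<ge> 1" unfolding S_def using s sum_mono[of UNIV pv c] cnn by simp
  then have Spos: "S > 0" by simp
  have cstat: "(\<Sum>a\<in>UNIV. c a * W$a$b) = c b" for b
  proof -
    have "c a * W$a$b = pv a * P$a$b + (if a = b then c b * zz b else 0)" for a
      unfolding W_def Wmat_entry c_def using zz[rule_format, of a] by (auto simp: field_simps)
    then have "(\<Sum>a\<in>UNIV. c a * W$a$b) = (\<Sum>a\<in>UNIV. pv a * P$a$b) + c b * zz b"
      by (simp add: sum.distrib)
    also have "\<dots> = pv b + c b * zz b" using stat by simp
    also have "\<dots> = c b" unfolding c_def using zz[rule_format, of b] by (auto simp: field_simps)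
    finally show ?thesis .
  qed
  define w where "w a = c a / S" for a
  have wnn: "\<forall>k. w k \<ge> 0" unfolding w_def using cnn nn Spos by (meson divide_nonneg_pos order_trans)
  have ws: "(\<Sum>k\<in>UNIV. w k) = 1" unfolding w_def using Spos by (simp add: sum_divide_distrib[symmetric] S_def)
  have wst: "\<forall>k. (\<Sum>a\<in>UNIV. w a * W$a$k) = w k"
  proof
    fix k
    have "(\<Sum>a\<in>UNIV. w a * W$a$k) = (\<Sum>a\<in>UNIV. c a * W$a$k) / S"
      unfolding w_def by (simp add: sum_divide_distrib)
    then show "(\<Sum>a\<in>UNIV. w a * W$a$k) = w k" using cstat unfolding w_def by simp
  qed
  have "Hmat P zz = (\<chi> a c. w c)"
    unfolding Hmat_def W_def[symmetric]
    by (rule Hmat_eq) (rule mpow_converges[OF WS d(2) d(1) wnn ws wst])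
  then show ?thesis unfolding w_def c_def S_def by simp
qed

lemma H_eq1:
  fixes P :: "real^'n^'n" and zz :: "'n \<Rightarrow> real"
  assumes st: "row_stochastic P" and irr: "irreducible_mat P"
    and zi: "zz i = 1" and zz: "\<forall>a. a \<noteq> i \<longrightarrow> 0 \<le> zz a \<and> zz a < 1"
  shows "Hmat P zz = (\<chi> a c. if c = i then 1 else 0)"
proof -
  define W where "W = Wmat P zz"
  have zz1: "\<forall>a. 0 \<le> zz a \<and> zz a \<le> 1" using zz zi by (metis less_imp_le order_refl zero_le_one)
  have WS: "row_stochastic W" unfolding W_def using W_stoch[OF st zz1] .
  have loop: "(i,i) \<in> edges W" unfolding W_def using W_loop[OF st zz1] zi by simp
  obtain M where M: "\<forall>m\<ge>M. (i,i) \<in> edges W ^^ m" using selfloop_reach[OF loop] by blast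
  have edge: "(a,b) \<in> edges W" if "(a,b) \<in> edges P" "a \<noteq> i" for a b
    unfolding W_def using W_edge[OF st zz1] zz that by (auto simp: edges_def)
  have reach: "(j,i) \<in> (edges W)\<^sup>*" for j
  proof -
    have "(j,i) \<in> (edges P)\<^sup>+" using irr unfolding irreducible_mat_def by blast
    then show ?thesis
    proof (induction rule: converse_trancl_induct)
      case (base y)
      then show ?case using edge by (cases "y = i") auto
    next
      case (step y z)
      show ?case
      proof (cases "y = i")
        case True then show ?thesis by simp
      next
        case False
        then have "(y,z) \<in> edges W" using edge step.hyps(1) by blast
        then show ?thesis using step.IH by (rule converse_rtrancl_into_rtrancl)
      qed
    qed
  qed
  obtain N where N: "\<forall>j. (j,i) \<in> edges W ^^ N" using reach_all[of i "edges W" M] reach M by blast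
  have Wnn: "\<forall>a b. W$a$b \<ge> 0" using WS unfolding row_stochastic_def by blast
  obtain d where d: "d > 0" "\<forall>a. mpow W N $ a $ i \<ge> d" using positive_column[OF Wnn N] by blast
  define w where "w c = (if c = i then 1 else 0 :: real)" for c
  have wnn: "\<forall>k. w k \<ge> 0" unfolding w_def by simp
  have ws: "(\<Sum>k\<in>UNIV. w k) = 1" unfolding w_def by simp
  have wst: "\<forall>k. (\<Sum>a\<in>UNIV. w a * W$a$k) = w k"
  proof
    fix k
    have "(\<Sum>a\<in>UNIV. w a * W$a$k) = (\<Sum>a\<in>UNIV. if a = i then W$i$k else 0)"
      unfolding w_def by (rule sum.cong) auto
    also have "\<dots> = W$i$k" by simp
    also have "\<dots> = w k" unfolding W_def Wmat_entry w_def using zi by simp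
    finally show "(\<Sum>a\<in>UNIV. w a * W$a$k) = w k" .
  qed
  have "Hmat P zz = (\<chi> a c. w c)"
    unfolding Hmat_def W_def[symmetric]
    by (rule Hmat_eq) (rule mpow_converges[OF WS d(2) d(1) wnn ws wst])
  then show ?thesis unfolding w_def by simp
qed



theorem proposition3:
  fixes P :: "real^'n^'n" and pi :: "'n \<Rightarrow> real" and sigma2 :: "'n \<Rightarrow> real"
    and z :: "'n \<Rightarrow> real" and i :: 'n
  assumes "CARD('n) \<ge> 2"
    and "row_stochastic P" and "irreducible_mat P" and "aperiodic_mat P"
    and "\<forall>j. pi j \<ge> 0" and "(\<Sum>j\<in>UNIV. pi j) = 1"
    and "transpose P *v (\<chi> j. pi j) = (\<chi> j. pi j)"
    and "\<forall>j. sigma2 j > 0"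
    and "\<forall>j. j \<noteq> i \<longrightarrow> 0 \<le> z j \<and> z j < 1"
  shows "best_response P sigma2 i z =
           {pos_part (1 - (\<Sum>j\<in>UNIV-{i}. pi j / (1 - z j)) * pi i * sigma2 i
                        / (\<Sum>j\<in>UNIV-{i}. (pi j)^2 * sigma2 j / (1 - z j)^2))}
       \<and> best_response P sigma2 i z \<subseteq> {0..<1}"
proof -
  note card = assms(1) and st = assms(2) and irr = assms(3) and ap = assms(4)
    and nn = assms(5) and s1 = assms(6) and sigp = assms(8) and zlt = assms(9)
  have stat: "\<forall>k. (\<Sum>a\<in>UNIV. pi a * P$a$k) = pi k" using stationary_P[OF assms(7)] by blast
  have pipos: "pi j > 0" for j using pi_pos[OF st irr nn s1 stat] .
  define p where "p = pi i"
  define s where "s = sigma2 i"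
  define A where "A = (\<Sum>j\<in>UNIV-{i}. pi j / (1 - z j))"
  define B where "B = (\<Sum>j\<in>UNIV-{i}. (pi j)^2 * sigma2 j / (1 - z j)^2)"
  have ne: "UNIV - {i} \<noteq> {}"
  proof
    assume "UNIV - {i} = {}"
    then have "UNIV = {i}" by blast
    then have "card (UNIV::'n set) = card {i}" by (rule arg_cong)
    then have "CARD('n) = 1" by simp
    then show False using card by simp
  qed
  have pp: "p > 0" unfolding p_def by (rule pipos)
  have sp: "s > 0" unfolding s_def using sigp by simp
  have Ap: "A > 0" unfolding A_def using ne zlt pipos by (intro sum_pos) auto
  have Bt: "0 < (pi j)^2 * sigma2 j / (1 - z j)^2" if "j \<in> UNIV-{i}" for j
  proof -
    have "1 - z j > 0" using zlt that by auto
    moreover have "(pi j)^2 > 0" using pipos[of j] by simp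
    ultimately show ?thesis using sigp by simp
  qed
  have Bp: "B > 0" unfolding B_def using ne Bt by (intro sum_pos) auto
  define C where "C y = cost P sigma2 i (z(i := y))" for y
  have C1: "C 1 = s"
  proof -
    have "Hmat P (z(i := 1)) = (\<chi> a c. if c = i then 1 else 0)"
      by (rule H_eq1[OF st irr]) (use zlt in auto)
    then have "C 1 = (\<Sum>j\<in>UNIV. if j = i then sigma2 i else 0)"
      unfolding C_def cost_def by (intro sum.cong) auto
    then show ?thesis unfolding s_def by simp
  qed
  have Clt: "C x = ff s A B (p / (1 - x))" if x: "0 \<le> x" "x < 1" for x
  proof -
    define zz where "zz = z(i := x)"
    have zz: "\<forall>a. 0 \<le> zz a \<and> zz a < 1" unfolding zz_def using zlt x by auto
    define c where "c j = pi j / (1 - zz j)" for j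
    define S where "S = (\<Sum>b\<in>UNIV. c b)"
    have H: "Hmat P zz = (\<chi> a j. c j / S)"
      unfolding c_def S_def by (rule H_lt1[OF st irr ap nn s1 stat zz])
    have ci: "c i = p / (1 - x)" unfolding c_def zz_def p_def by simp
    have rest: "c j = pi j / (1 - z j)" if "j \<in> UNIV - {i}" for j
      using that unfolding c_def zz_def by simp
    have S: "S = p / (1 - x) + A"
    proof -
      have "S = c i + (\<Sum>b\<in>UNIV-{i}. c b)" unfolding S_def by (simp add: sum.remove)
      also have "(\<Sum>b\<in>UNIV-{i}. c b) = A" unfolding A_def by (rule sum.cong) (auto simp: rest)
      finally show ?thesis using ci by simp
    qed
    have "C x = (\<Sum>j\<in>UNIV. (c j / S)^2 * sigma2 j)" unfolding C_def cost_def zz_def[symmetric] H by simp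
    also have "\<dots> = (\<Sum>j\<in>UNIV. (c j)^2 * sigma2 j) / S^2"
      by (simp add: sum_divide_distrib power_divide)
    also have "(\<Sum>j\<in>UNIV. (c j)^2 * sigma2 j) = (c i)^2 * sigma2 i + (\<Sum>j\<in>UNIV-{i}. (c j)^2 * sigma2 j)"
      by (simp add: sum.remove)
    also have "(\<Sum>j\<in>UNIV-{i}. (c j)^2 * sigma2 j) = B"
      unfolding B_def by (rule sum.cong) (auto simp: rest power_divide)
    finally show ?thesis unfolding ff_def S ci s_def by (simp add: mult.commute)
  qed
  define x0 where "x0 = pos_part (1 - A * p * s / B)"
  have x0: "0 \<le> x0" "x0 < 1"
  proof -
    have "A * p * s / B > 0" using Ap pp sp Bp by simp
    then show "0 \<le> x0" "x0 < 1" unfolding x0_def pos_part_def by auto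
  qed
  have strict: "C x0 < C x" if x: "0 \<le> x" "x \<le> 1" "x \<noteq> x0" for x
  proof -
    define u0 where "u0 = p / (1 - x0)"
    have u0p: "u0 > 0" unfolding u0_def using pp x0 by simp
    have Cx0: "C x0 = ff s A B u0" unfolding u0_def using Clt x0 by simp
    have vB: "s * A * u0 \<ge> B"
    proof (cases "A * p * s \<le> B")
      case True
      then have "x0 = 1 - A * p * s / B" unfolding x0_def pos_part_def using Bp by simp
      then have "1 - x0 = A * p * s / B" by simp
      then have "u0 = p / (A * p * s / B)" unfolding u0_def by simp
      also have "\<dots> = B / (A * s)" using pp Bp Ap sp by (simp add: field_simps)
      finally have "u0 = B / (A * s)" .
      then show ?thesis using Ap sp by simp
    next
      case False
      then have "x0 = 0" unfolding x0_def pos_part_def using Bp by (simp add: field_simps)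
      then show ?thesis unfolding u0_def using False by (simp add: mult.commute mult.left_commute)
    qed
    show ?thesis
    proof (cases "x = 1")
      case True
      then show ?thesis using C1 Cx0 ff_below[OF sp Ap Bp u0p vB] by simp
    next
      case False
      then have xl: "x < 1" using x by simp
      define u where "u = p / (1 - x)"
      have up: "u > 0" unfolding u_def using pp xl by simp
      have Cx: "C x = ff s A B u" unfolding u_def using Clt x xl by simp
      have une: "u \<noteq> u0"
      proof
        assume "u = u0"
        then have "p / (1 - x) = p / (1 - x0)" unfolding u_def u0_def .
        then have "1 - x = 1 - x0" using pp xl x0 by (simp add: field_simps)
        then show False using x by simp
      qed
      show ?thesis
      proof (cases "A * p * s \<le> B")
        case True
        then have "x0 = 1 - A * p * s / B" unfolding x0_def pos_part_def using Bp by simp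
        then have "1 - x0 = A * p * s / B" by simp
        then have "u0 = p / (A * p * s / B)" unfolding u0_def by simp
      also have "\<dots> = B / (A * s)" using pp Bp Ap sp by (simp add: field_simps)
      finally have "u0 = B / (A * s)" .
        then have eq: "s * A * u0 = B" using Ap sp by simp
        show ?thesis using ff_min_interior[OF sp Ap Bp up eq une] Cx Cx0 by simp
      next
        case False
        then have "x0 = 0" unfolding x0_def pos_part_def using Bp by (simp add: field_simps)
        then have "x > 0" using x by simp
        then have "u > u0" unfolding u_def u0_def using \<open>x0 = 0\<close> pp xl by (simp add: field_simps)
        then show ?thesis using ff_min_boundary[OF sp Ap Bp u0p vB] Cx Cx0 by simp
      qed
    qed
  qed
  have BR: "best_response P sigma2 i z = {x0}"
  proof
    show "best_response P sigma2 i z \<subseteq> {x0}"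
    proof
      fix x assume "x \<in> best_response P sigma2 i z"
      then have "x \<in> {0..1}" "C x \<le> C x0" unfolding best_response_def C_def using x0 by auto
      then show "x \<in> {x0}" using strict[of x] by fastforce
    qed
  next
    have "C x0 \<le> C y" if "y \<in> {0..1}" for y
      using strict[of y] that by (cases "y = x0") auto
    then show "{x0} \<subseteq> best_response P sigma2 i z"
      unfolding best_response_def C_def using x0 by auto
  qed
  show ?thesis using BR x0 unfolding x0_def A_def B_def p_def s_def by simp
qed

end
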